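(* Let $w=w(x_1,\dots,x_n)$ be a multilinear commutator word. Assume that $T$ is a normal subgroup of a group $G$ and $a_1,\dots,a_n$ are elements of $G$ such that every element of the form $w(y_1,\dots,y_n)$ with $y_i\in a_iT$ for all $i$ has at most $m$ conjugates in $G$. Then every $w$-value of $T$ (i.e. every $w(t_1,\dots,t_n)$ with $t_i\in T$) has at most $m^{2^n}$ conjugates in $G$.
   Context: Multilinear commutator words are defined recursively: $x$ is a multilinear commutator, and if $u,v$ are multilinear commutators in disjoint sets of variables then $[u,v]$ is one. *)

theory Defs
  imports "HOL-Algebra.Algebra"
begin

datatype cword = Var nat | Comm cword cword

fun vars :: "cword \<Rightarrow> nat set" where
  "vars (Var i) = {i}"
| "vars (Comm u v) = vars u \<union> vars v"

fun multilinear :: "cword \<Rightarrow> bool" where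
  "multilinear (Var i) = True"
| "multilinear (Comm u v) = (multilinear u \<and> multilinear v \<and> vars u \<inter> vars v = {})"

definition gcomm :: "('a, 'b) monoid_scheme \<Rightarrow> 'a \<Rightarrow> 'a \<Rightarrow> 'a" where
  "gcomm G a b = inv\<^bsub>G\<^esub> a \<otimes>\<^bsub>G\<^esub> inv\<^bsub>G\<^esub> b \<otimes>\<^bsub>G\<^esub> a \<otimes>\<^bsub>G\<^esub> b"

fun weval :: "('a, 'b) monoid_scheme \<Rightarrow> cword \<Rightarrow> (nat \<Rightarrow> 'a) \<Rightarrow> 'a" where
  "weval G (Var i) f = f i"
| "weval G (Comm u v) f = gcomm G (weval G u f) (weval G v f)"

definition conj_class :: "('a, 'b) monoid_scheme \<Rightarrow> 'a \<Rightarrow> 'a set" where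
  "conj_class G x = {g \<otimes>\<^bsub>G\<^esub> x \<otimes>\<^bsub>G\<^esub> inv\<^bsub>G\<^esub> g | g. g \<in> carrier G}"

definition at_most_conj :: "('a, 'b) monoid_scheme \<Rightarrow> 'a \<Rightarrow> nat \<Rightarrow> bool" where
  "at_most_conj G x m \<longleftrightarrow> finite (conj_class G x) \<and> card (conj_class G x) \<le> m"

end

theory Submission
  imports Defs
begin

lemma (in group) canc1: "x \<in> carrier G \<Longrightarrow> y \<in> carrier G \<Longrightarrow> x \<otimes> (inv x \<otimes> y) = y"
  by (simp add: m_assoc[symmetric])
lemma (in group) canc2: "x \<in> carrier G \<Longrightarrow> y \<in> carrier G \<Longrightarrow> inv x \<otimes> (x \<otimes> y) = y"
  by (simp add: m_assoc[symmetric])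

lemma (in group) idu:
  assumes "A \<in> carrier G" "B \<in> carrier G" "V \<in> carrier G"
  shows "gcomm G (inv A \<otimes> B) V = inv (inv (inv A \<otimes> B) \<otimes> gcomm G A V \<otimes> (inv A \<otimes> B)) \<otimes> gcomm G B V"
  using assms by (simp add: gcomm_def m_assoc inv_mult_group canc1 canc2)

lemma (in group) idv:
  assumes "A \<in> carrier G" "B \<in> carrier G" "U \<in> carrier G"
  defines "k \<equiv> inv A \<otimes> B"
  defines "Q \<equiv> inv k \<otimes> gcomm G U A \<otimes> k"
  defines "P \<equiv> gcomm G U B"
  defines "g \<equiv> Q \<otimes> inv P"
  shows "gcomm G U (inv A \<otimes> B) = inv (inv g \<otimes> Q \<otimes> g) \<otimes> P"
  using assms by (simp add: gcomm_def m_assoc inv_mult_group canc1 canc2)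

lemma (in group) gcomm_conj: "a \<in> carrier G \<Longrightarrow> b \<in> carrier G \<Longrightarrow> k \<in> carrier G \<Longrightarrow>
  gcomm G (inv k \<otimes> a \<otimes> k) (inv k \<otimes> b \<otimes> k) = inv k \<otimes> gcomm G a b \<otimes> k"
  by (simp add: gcomm_def m_assoc inv_mult_group canc1 canc2)

lemma weval_cong: "(\<forall>i\<in>vars w. f i = g i) \<Longrightarrow> weval G w f = weval G w g"
  by (induction w) auto

lemma finite_vars: "finite (vars w)"
  by (induction w) auto

lemma (in group) weval_carrier: "(\<forall>i\<in>vars w. f i \<in> carrier G) \<Longrightarrow> weval G w f \<in> carrier G"
  by (induction w) (auto simp: gcomm_def)

lemma (in group) weval_conj: "k \<in> carrier G \<Longrightarrow> (\<forall>i\<in>vars w. f i \<in> carrier G) \<Longrightarrow>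
  weval G w (\<lambda>i. inv k \<otimes> f i \<otimes> k) = inv k \<otimes> weval G w f \<otimes> k"
  by (induction w) (auto simp: gcomm_conj weval_carrier)

lemma (in normal) rcos_gcomm: "a \<in> carrier G \<Longrightarrow> b \<in> carrier G \<Longrightarrow>
  H #> gcomm G a b = set_inv (H #> a) <#> set_inv (H #> b) <#> (H #> a) <#> (H #> b)"
  by (simp add: gcomm_def rcos_sum rcos_inv)

lemma (in normal) weval_rcos:
  "(\<forall>i\<in>vars w. f i \<in> carrier G \<and> g i \<in> carrier G \<and> H #> f i = H #> g i) \<Longrightarrow>
   H #> weval G w f = H #> weval G w g"
proof (induction w)
  case (Var x)
  then show ?case by simp
next
  case (Comm u v)
  then show ?case by (simp add: rcos_gcomm weval_carrier)
qed

lemma (in normal) conj_rcos: "y \<in> carrier G \<Longrightarrow> s \<in> H \<Longrightarrow> H #> (inv s \<otimes> y \<otimes> s) = H #> y"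
proof -
  assume y: "y \<in> carrier G" and s: "s \<in> H"
  have sc: "s \<in> carrier G" using s by auto
  have "(inv s \<otimes> y \<otimes> s) \<otimes> inv y = inv s \<otimes> (y \<otimes> s \<otimes> inv y)"
    using y sc by (simp add: m_assoc)
  also have "\<dots> \<in> H" using y s by (simp add: inv_op_closed2)
  finally have "inv s \<otimes> y \<otimes> s \<in> H #> y"
    using y sc by (simp add: rcos_module is_group)
  then show ?thesis using y repr_independence[OF _ y subgroup_axioms] by simp
qed

lemma (in normal) lcos_conj: "a \<in> carrier G \<Longrightarrow> x \<in> a <# H \<Longrightarrow> k \<in> H \<Longrightarrow> inv k \<otimes> x \<otimes> k \<in> a <# H"
proof -
  assume a: "a \<in> carrier G" and x: "x \<in> a <# H" and k: "k \<in> H"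
  obtain h where h: "h \<in> H" "x = a \<otimes> h" using x unfolding l_coset_def by auto
  have kc: "k \<in> carrier G" "h \<in> carrier G" using k h by auto
  have "inv k \<otimes> x \<otimes> k = a \<otimes> ((inv a \<otimes> inv k \<otimes> a) \<otimes> h \<otimes> k)"
    using a kc h by (simp add: m_assoc canc1)
  moreover have "(inv a \<otimes> inv k \<otimes> a) \<otimes> h \<otimes> k \<in> H"
    using a k h by (simp add: inv_op_closed1)
  ultimately show ?thesis unfolding l_coset_def by auto
qed

definition rel :: "('a, 'b) monoid_scheme \<Rightarrow> 'a set \<Rightarrow> nat set \<Rightarrow> nat \<Rightarrow> 'a \<Rightarrow> (nat \<Rightarrow> 'a) \<Rightarrow> (nat \<Rightarrow> 'a) \<Rightarrow> bool" where
  "rel G H V j a y' y \<longleftrightarrow> (\<forall>i\<in>V - {j}. \<exists>s\<in>H. y' i = inv\<^bsub>G\<^esub> s \<otimes>\<^bsub>G\<^esub> y i \<otimes>\<^bsub>G\<^esub> s) \<and> y' j \<in> a <#\<^bsub>G\<^esub> H"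

lemma (in normal) rel_conj:
  assumes "rel G H V j a y' y" "k \<in> H" "a \<in> carrier G" "\<forall>i\<in>V. y i \<in> carrier G"
  shows "rel G H V j a (\<lambda>i. inv k \<otimes> y' i \<otimes> k) y"
proof -
  have 1: "inv k \<otimes> y' j \<otimes> k \<in> a <# H" using assms lcos_conj unfolding rel_def by auto
  have 2: "\<exists>s\<in>H. inv k \<otimes> y' i \<otimes> k = inv s \<otimes> y i \<otimes> s" if i: "i \<in> V - {j}" for i
  proof -
    obtain s where s: "s \<in> H" "y' i = inv s \<otimes> y i \<otimes> s" using assms(1) i unfolding rel_def by auto
    have "inv k \<otimes> y' i \<otimes> k = inv (s \<otimes> k) \<otimes> y i \<otimes> (s \<otimes> k)"
      using s assms i by (simp add: m_assoc inv_mult_group)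
    moreover have "s \<otimes> k \<in> H" using s assms by auto
    ultimately show ?thesis by blast
  qed
  show ?thesis using 1 2 unfolding rel_def by blast
qed

lemma (in normal) rel_carrier:
  assumes "rel G H V j a y' y" "a \<in> carrier G" "\<forall>i\<in>V. y i \<in> carrier G" "i \<in> V"
  shows "y' i \<in> carrier G"
proof (cases "i = j")
  case True
  then show ?thesis using assms l_coset_subset_G[of H a] subset unfolding rel_def by auto
next
  case False
  then obtain s where "s \<in> H" "y' i = inv s \<otimes> y i \<otimes> s" using assms unfolding rel_def by auto
  then show ?thesis using assms by auto
qed

lemma (in normal) rel_rcos:
  assumes "rel G H (vars w) j a y' y" "a \<in> carrier G" "\<forall>i\<in>vars w. y i \<in> carrier G" "t \<in> H"
  shows "H #> weval G w y' = H #> weval G w (y(j := a \<otimes> t))"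
proof (rule weval_rcos, intro ballI conjI)
  fix i assume i: "i \<in> vars w"
  show "y' i \<in> carrier G" using rel_carrier assms i by blast
  show "(y(j := a \<otimes> t)) i \<in> carrier G" using assms i by auto
  show "H #> y' i = H #> (y(j := a \<otimes> t)) i"
  proof (cases "i = j")
    case True
    have at: "a \<otimes> t \<in> H #> a" using assms coset_eq unfolding l_coset_def by auto
    have yj: "y' j \<in> H #> a" using assms coset_eq unfolding rel_def by auto
    show ?thesis using True repr_independence[OF at assms(2) subgroup_axioms]
        repr_independence[OF yj assms(2) subgroup_axioms] by simp
  next
    case False
    then obtain s where "s \<in> H" "y' i = inv s \<otimes> y i \<otimes> s" using assms i unfolding rel_def by auto
    then show ?thesis using False conj_rcos assms i by auto
  qed
qed

lemma (in normal) rcos_eq_mem: "A \<in> carrier G \<Longrightarrow> B \<in> carrier G \<Longrightarrow> H #> A = H #> B \<Longrightarrow> inv A \<otimes> B \<in> H"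
proof -
  assume A: "A \<in> carrier G" and B: "B \<in> carrier G" and e: "H #> A = H #> B"
  have "B \<in> H #> A" using e B rcos_self subgroup_axioms by auto
  then have "B \<otimes> inv A \<in> H" using rcos_module A B is_group by blast
  then have "inv A \<otimes> (B \<otimes> inv A) \<otimes> A \<in> H" using A by (simp add: inv_op_closed1)
  then show ?thesis using A B by (simp add: m_assoc)
qed


lemma (in normal) claim:
  assumes "multilinear w" "j \<in> vars w" "a \<in> carrier G" "t \<in> H" "\<forall>i\<in>vars w. y i \<in> carrier G"
  shows "\<exists>y'. rel G H (vars w) j a y' y \<and>
     weval G w (y(j:=t)) = inv (weval G w y') \<otimes> weval G w (y(j:=a \<otimes> t))"
  using assms
proof (induction w arbitrary: y)
  case (Var x)
  have "rel G H (vars (Var x)) j a (y(j:=a)) y"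
    unfolding rel_def using Var by (auto intro!: lcos_mult_one simp: l_coset_def intro: bexI[of _ \<one>])
  moreover have "weval G (Var x) (y(j:=t)) = inv (weval G (Var x) (y(j:=a))) \<otimes> weval G (Var x) (y(j:=a \<otimes> t))"
    using Var by (simp add: canc2)
  ultimately show ?case by blast
next
  case (Comm u v)
  have tc: "t \<in> carrier G" using Comm by auto
  have atc: "a \<otimes> t \<in> carrier G" using Comm tc by auto
  show ?case
  proof (cases "j \<in> vars u")
    case True
    have jv: "j \<notin> vars v" using True Comm by auto
    have preu: "multilinear u" "\<forall>i\<in>vars u. y i \<in> carrier G" using Comm.prems by auto
    obtain y' where y': "rel G H (vars u) j a y' y"
      "weval G u (y(j:=t)) = inv (weval G u y') \<otimes> weval G u (y(j:=a \<otimes> t))"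
      using Comm.IH(1)[OF preu(1) True Comm.prems(3) Comm.prems(4) preu(2)] by blast
    define z where "z = (\<lambda>i. if i \<in> vars u then y' i else y i)"
    have relz: "rel G H (vars (Comm u v)) j a z y"
    proof -
      have triv: "\<forall>i\<in>vars (Comm u v). \<exists>s\<in>H. y i = inv s \<otimes> y i \<otimes> s"
        using Comm.prems by (auto intro!: bexI[of _ \<one>])
      show ?thesis using y'(1) True triv unfolding rel_def z_def by auto
    qed
    have zc: "\<forall>i\<in>vars (Comm u v). z i \<in> carrier G"
      using rel_carrier[OF relz] Comm.prems by blast
    define A where "A = weval G u y'"
    define B where "B = weval G u (y(j:=a \<otimes> t))"
    define V where "V = weval G v y"
    have Az: "weval G u z = A" unfolding A_def z_def by (rule weval_cong) auto
    have Vz: "weval G v z = V" unfolding V_def z_def using Comm.prems by (intro weval_cong) auto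
    have Vt: "weval G v (y(j:=t)) = V" "weval G v (y(j:=a\<otimes>t)) = V"
      unfolding V_def using jv by (auto intro!: weval_cong)
    have Ac: "A \<in> carrier G" using Az zc weval_carrier by (metis Un_iff vars.simps(2))
    have Bc: "B \<in> carrier G" unfolding B_def using Comm.prems atc by (intro weval_carrier) auto
    have Vc: "V \<in> carrier G" unfolding V_def using Comm.prems by (intro weval_carrier) auto
    have "H #> A = H #> B"
      using rel_rcos[of u j a z y t] relz Comm.prems Az unfolding B_def rel_def by auto
    then have k: "inv A \<otimes> B \<in> H" using rcos_eq_mem Ac Bc by blast
    define y'' where "y'' = (\<lambda>i. inv (inv A \<otimes> B) \<otimes> z i \<otimes> (inv A \<otimes> B))"
    have "rel G H (vars (Comm u v)) j a y'' y"
      unfolding y''_def using rel_conj[OF relz k] Comm.prems by blast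
    moreover have "weval G (Comm u v) y'' = inv (inv A \<otimes> B) \<otimes> gcomm G A V \<otimes> (inv A \<otimes> B)"
    proof -
      have "weval G (Comm u v) y'' = inv (inv A \<otimes> B) \<otimes> weval G (Comm u v) z \<otimes> (inv A \<otimes> B)"
        unfolding y''_def using k zc by (intro weval_conj) auto
      then show ?thesis using Az Vz by simp
    qed
    moreover have "weval G (Comm u v) (y(j:=t)) = gcomm G (inv A \<otimes> B) V"
      using y'(2) Vt unfolding A_def B_def by simp
    moreover have "weval G (Comm u v) (y(j:=a \<otimes> t)) = gcomm G B V"
      using Vt unfolding B_def by simp
    ultimately show ?thesis using idu[OF Ac Bc Vc] by metis
  next
    case False
    have jv: "j \<in> vars v" using False Comm by auto
    have prev: "multilinear v" "\<forall>i\<in>vars v. y i \<in> carrier G" using Comm.prems by auto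
    obtain y' where y': "rel G H (vars v) j a y' y"
      "weval G v (y(j:=t)) = inv (weval G v y') \<otimes> weval G v (y(j:=a \<otimes> t))"
      using Comm.IH(2)[OF prev(1) jv Comm.prems(3) Comm.prems(4) prev(2)] by blast
    define z where "z = (\<lambda>i. if i \<in> vars v then y' i else y i)"
    have relz: "rel G H (vars (Comm u v)) j a z y"
    proof -
      have triv: "\<forall>i\<in>vars (Comm u v). \<exists>s\<in>H. y i = inv s \<otimes> y i \<otimes> s"
        using Comm.prems by (auto intro!: bexI[of _ \<one>])
      show ?thesis using y'(1) jv triv unfolding rel_def z_def by auto
    qed
    have zc: "\<forall>i\<in>vars (Comm u v). z i \<in> carrier G"
      using rel_carrier[OF relz] Comm.prems by blast
    define A where "A = weval G v y'"
    define B where "B = weval G v (y(j:=a \<otimes> t))"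
    define U where "U = weval G u y"
    have Az: "weval G v z = A" unfolding A_def z_def by (rule weval_cong) auto
    have Uz: "weval G u z = U" unfolding U_def z_def using Comm.prems by (intro weval_cong) auto
    have Ut: "weval G u (y(j:=t)) = U" "weval G u (y(j:=a\<otimes>t)) = U"
      unfolding U_def using False by (auto intro!: weval_cong)
    have Ac: "A \<in> carrier G" using Az zc weval_carrier by (metis Un_iff vars.simps(2))
    have Bc: "B \<in> carrier G" unfolding B_def using Comm.prems atc by (intro weval_carrier) auto
    have Uc: "U \<in> carrier G" unfolding U_def using Comm.prems by (intro weval_carrier) auto
    have "H #> A = H #> B"
      using rel_rcos[of v j a z y t] relz Comm.prems Az unfolding B_def rel_def by auto
    then have k: "inv A \<otimes> B \<in> H" using rcos_eq_mem Ac Bc by blast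
    define k' where "k' = inv A \<otimes> B"
    have k'c: "k' \<in> carrier G" using k unfolding k'_def by auto
    define y1 where "y1 = (\<lambda>i. inv k' \<otimes> z i \<otimes> k')"
    have rel1: "rel G H (vars (Comm u v)) j a y1 y"
      unfolding y1_def k'_def using rel_conj[OF relz k] Comm.prems by blast
    define Q where "Q = inv k' \<otimes> gcomm G U A \<otimes> k'"
    define P where "P = gcomm G U B"
    have Qw: "weval G (Comm u v) y1 = Q"
    proof -
      have "weval G (Comm u v) y1 = inv k' \<otimes> weval G (Comm u v) z \<otimes> k'"
        unfolding y1_def using k'c zc by (intro weval_conj) auto
      then show ?thesis using Az Uz unfolding Q_def by simp
    qed
    have Pw: "weval G (Comm u v) (y(j:=a \<otimes> t)) = P"
      using Ut unfolding B_def P_def by simp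
    have "H #> Q = H #> P"
      using rel_rcos[OF rel1 _ _ Comm.prems(4)] Comm.prems Qw Pw by auto
    have Qc: "Q \<in> carrier G" unfolding Q_def using Uc Ac k'c by (simp add: gcomm_def)
    have Pc: "P \<in> carrier G" unfolding P_def using Uc Bc by (simp add: gcomm_def)
    have "Q \<in> H #> P" using \<open>H #> Q = H #> P\<close> Qc rcos_self subgroup_axioms by metis
    then have g: "Q \<otimes> inv P \<in> H" using rcos_module Qc Pc is_group by blast
    define y'' where "y'' = (\<lambda>i. inv (Q \<otimes> inv P) \<otimes> y1 i \<otimes> (Q \<otimes> inv P))"
    have "rel G H (vars (Comm u v)) j a y'' y"
      unfolding y''_def using rel_conj[OF rel1 g] Comm.prems by blast
    moreover have "weval G (Comm u v) y'' = inv (Q \<otimes> inv P) \<otimes> Q \<otimes> (Q \<otimes> inv P)"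
    proof -
      have y1c: "\<forall>i\<in>vars (Comm u v). y1 i \<in> carrier G"
        using rel_carrier[OF rel1] Comm.prems by blast
      have "weval G (Comm u v) y'' = inv (Q \<otimes> inv P) \<otimes> weval G (Comm u v) y1 \<otimes> (Q \<otimes> inv P)"
        unfolding y''_def using g y1c by (intro weval_conj) auto
      then show ?thesis using Qw by simp
    qed
    moreover have "weval G (Comm u v) (y(j:=t)) = gcomm G U (inv A \<otimes> B)"
      using y'(2) Ut unfolding A_def B_def by simp
    ultimately show ?thesis using idv[OF Ac Bc Uc] Pw unfolding Q_def P_def k'_def by metis
  qed
qed


lemma (in group) conj_class_inv: "x \<in> carrier G \<Longrightarrow> conj_class G (inv x) = (\<lambda>z. inv z) ` conj_class G x"
proof -
  assume x: "x \<in> carrier G"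
  have e: "g \<otimes> inv x \<otimes> inv g = inv (g \<otimes> x \<otimes> inv g)" if "g \<in> carrier G" for g
    using that x by (simp add: inv_mult_group m_assoc)
  show ?thesis
  proof
    show "conj_class G (inv x) \<subseteq> (\<lambda>z. inv z) ` conj_class G x"
    proof
      fix z assume "z \<in> conj_class G (inv x)"
      then obtain g where g: "g \<in> carrier G" "z = g \<otimes> inv x \<otimes> inv g" unfolding conj_class_def by auto
      then have "z = inv (g \<otimes> x \<otimes> inv g)" using e by simp
      moreover have "g \<otimes> x \<otimes> inv g \<in> conj_class G x" using g unfolding conj_class_def by blast
      ultimately show "z \<in> (\<lambda>z. inv z) ` conj_class G x" by blast
    qed
  next
    show "(\<lambda>z. inv z) ` conj_class G x \<subseteq> conj_class G (inv x)"
    proof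
      fix z assume "z \<in> (\<lambda>z. inv z) ` conj_class G x"
      then obtain g where g: "g \<in> carrier G" "z = inv (g \<otimes> x \<otimes> inv g)" unfolding conj_class_def by auto
      then have "z = g \<otimes> inv x \<otimes> inv g" using e by simp
      then show "z \<in> conj_class G (inv x)" using g unfolding conj_class_def by blast
    qed
  qed
qed

lemma (in group) conj_class_mult: "x \<in> carrier G \<Longrightarrow> y \<in> carrier G \<Longrightarrow>
  conj_class G (x \<otimes> y) \<subseteq> (\<lambda>(p,q). p \<otimes> q) ` (conj_class G x \<times> conj_class G y)"
proof
  fix z assume x: "x \<in> carrier G" and y: "y \<in> carrier G" and z: "z \<in> conj_class G (x \<otimes> y)"
  then obtain g where g: "g \<in> carrier G" "z = g \<otimes> (x \<otimes> y) \<otimes> inv g" unfolding conj_class_def by auto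
  have "z = (g \<otimes> x \<otimes> inv g) \<otimes> (g \<otimes> y \<otimes> inv g)" using g x y by (simp add: m_assoc canc2)
  moreover have "(g \<otimes> x \<otimes> inv g, g \<otimes> y \<otimes> inv g) \<in> conj_class G x \<times> conj_class G y"
    using g unfolding conj_class_def by blast
  ultimately show "z \<in> (\<lambda>(p,q). p \<otimes> q) ` (conj_class G x \<times> conj_class G y)"
    by (metis (no_types, lifting) case_prod_conv image_eqI)
qed

lemma (in group) amc_step:
  assumes "x \<in> carrier G" "y \<in> carrier G" "at_most_conj G x M" "at_most_conj G y M"
  shows "at_most_conj G (inv x \<otimes> y) (M * M)"
proof -
  have fx: "finite (conj_class G (inv x))" "card (conj_class G (inv x)) \<le> M"
    using assms conj_class_inv[OF assms(1)] card_image_le[of "conj_class G x" "m_inv G"] unfolding at_most_conj_def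
    by auto
  have fy: "finite (conj_class G y)" "card (conj_class G y) \<le> M"
    using assms unfolding at_most_conj_def by auto
  let ?S = "(\<lambda>(p,q). p \<otimes> q) ` (conj_class G (inv x) \<times> conj_class G y)"
  have sub: "conj_class G (inv x \<otimes> y) \<subseteq> ?S" using conj_class_mult assms by auto
  have fS: "finite ?S" using fx fy by auto
  have "card ?S \<le> card (conj_class G (inv x)) * card (conj_class G y)"
    using card_image_le[of "conj_class G (inv x) \<times> conj_class G y"] fx fy card_cartesian_product by fastforce
  also have "\<dots> \<le> M * M" using fx fy mult_le_mono by blast
  finally show ?thesis unfolding at_most_conj_def using sub fS card_mono finite_subset le_trans by metis
qed

lemma (in normal) main:
  assumes "multilinear w"
    and "\<forall>i \<in> vars w. a i \<in> carrier G"
    and hyp: "\<forall>y. (\<forall>i \<in> vars w. y i \<in> a i <# H) \<longrightarrow> at_most_conj G (weval G w y) m"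
    and "finite S"
  shows "S \<subseteq> vars w \<Longrightarrow> \<forall>y. (\<forall>i\<in>vars w. y i \<in> (if i \<in> S then H else a i <# H))
     \<longrightarrow> at_most_conj G (weval G w y) (m ^ (2 ^ card S))"
  using assms(4)
proof (induction S rule: finite_induct)
  case empty
  then show ?case using hyp by simp
next
  case (insert j S)
  show ?case
  proof (intro allI impI)
    fix y assume y: "\<forall>i\<in>vars w. y i \<in> (if i \<in> insert j S then H else a i <# H)"
    have j: "j \<in> vars w" using insert by auto
    have yc: "\<forall>i\<in>vars w. y i \<in> carrier G"
    proof
      fix i assume i: "i \<in> vars w"
      show "y i \<in> carrier G"
      proof (cases "i \<in> insert j S")
        case True then show ?thesis using y i subset by auto
      next
        case False then have "y i \<in> a i <# H" using y i by auto
        then show ?thesis using l_coset_subset_G[OF subset, of "a i"] assms(2) i by auto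
      qed
    qed
    have t: "y j \<in> H" using y j by auto
    have aj: "a j \<in> carrier G" using assms(2) j by auto
    obtain y' where y': "rel G H (vars w) j (a j) y' y"
      "weval G w (y(j:=y j)) = inv (weval G w y') \<otimes> weval G w (y(j:=a j \<otimes> y j))"
      using claim[OF assms(1) j aj t yc] by blast
    let ?M = "m ^ (2 ^ card S)"
    have IH: "\<forall>y. (\<forall>i\<in>vars w. y i \<in> (if i \<in> S then H else a i <# H)) \<longrightarrow> at_most_conj G (weval G w y) ?M"
      using insert by auto
    have d1: "\<forall>i\<in>vars w. y' i \<in> (if i \<in> S then H else a i <# H)"
    proof
      fix i assume i: "i \<in> vars w"
      show "y' i \<in> (if i \<in> S then H else a i <# H)"
      proof (cases "i = j")
        case True then show ?thesis using y'(1) insert unfolding rel_def by auto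
      next
        case False
        then obtain s where s: "s \<in> H" "y' i = inv s \<otimes> y i \<otimes> s" using y'(1) i unfolding rel_def by auto
        show ?thesis
        proof (cases "i \<in> S")
          case True then show ?thesis using s y i by auto
        next
          case nS: False
          then have "y i \<in> a i <# H" using y i False by auto
          then show ?thesis using nS s lcos_conj assms(2) i by auto
        qed
      qed
    qed
    have d2: "\<forall>i\<in>vars w. (y(j:=a j \<otimes> y j)) i \<in> (if i \<in> S then H else a i <# H)"
      using y insert t unfolding l_coset_def by auto
    have c1: "weval G w y' \<in> carrier G"
      using rel_carrier[OF y'(1) aj yc] by (intro weval_carrier) auto
    have c2: "weval G w (y(j:=a j \<otimes> y j)) \<in> carrier G"
      using yc aj t by (intro weval_carrier) auto
    have "at_most_conj G (weval G w y) (?M * ?M)"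
      using amc_step[OF c1 c2] IH d1 d2 y'(2) by simp
    moreover have "?M * ?M = m ^ (2 ^ card (insert j S))"
      using insert by (simp add: power_add[symmetric] mult_2)
    ultimately show "at_most_conj G (weval G w y) (m ^ (2 ^ card (insert j S)))" by simp
  qed
qed

theorem lemma3p4:
  fixes G :: "('a, 'b) monoid_scheme" and w :: cword and T :: "'a set"
    and a :: "nat \<Rightarrow> 'a" and m :: nat
  assumes "group G"
    and "multilinear w"
    and "T \<lhd> G"
    and "\<forall>i \<in> vars w. a i \<in> carrier G"
    and "\<forall>y. (\<forall>i \<in> vars w. y i \<in> a i <#\<^bsub>G\<^esub> T) \<longrightarrow> at_most_conj G (weval G w y) m"
  shows "\<forall>t. (\<forall>i \<in> vars w. t i \<in> T) \<longrightarrow> at_most_conj G (weval G w t) (m ^ (2 ^ card (vars w)))"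
  using normal.main[OF assms(3) assms(2) assms(4) assms(5) finite_vars order_refl] by simp

end
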